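(* If $T$ is a subcubic tree, then $\gamma(T)=\gamma_{e,f}^*(T)$ if and only if $T$ is $K_{1,3}$.
   Context: All graphs are finite, simple and undirected; subcubic means maximum degree at most $3$; $K_{1,3}$ is the star with three leaves. $\gamma(G)$ is the domination number of $G$ (minimum size of a set $D$ such that every vertex not in $D$ has a neighbor in $D$). The fractional porous exponential domination number $\gamma_{e,f}^*(G)$ is the optimum value of the linear program: minimize $\sum_{u\in V(G)}x(u)$ subject to $\sum_{u\in V(G)}\left(\frac12\right)^{\mathrm{dist}_G(u,v)-1}x(u)\ge 1$ for every $v\in V(G)$ and $x\ge 0$, where $\mathrm{dist}_G$ is the usual distance and $\left(\frac12\right)^\infty=0$. *)

theory Defs
  imports Complex_Main
begin

definition graph :: "'a set \<Rightarrow> ('a \<Rightarrow> 'a \<Rightarrow> bool) \<Rightarrow> bool" where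
  "graph V E \<longleftrightarrow> finite V \<and> (\<forall>u v. E u v \<longrightarrow> u \<in> V \<and> v \<in> V)
     \<and> (\<forall>u v. E u v \<longrightarrow> E v u) \<and> (\<forall>v. \<not> E v v)"

definition degree :: "'a set \<Rightarrow> ('a \<Rightarrow> 'a \<Rightarrow> bool) \<Rightarrow> 'a \<Rightarrow> nat" where
  "degree V E v = card {u \<in> V. E v u}"

definition subcubic :: "'a set \<Rightarrow> ('a \<Rightarrow> 'a \<Rightarrow> bool) \<Rightarrow> bool" where
  "subcubic V E \<longleftrightarrow> (\<forall>v\<in>V. degree V E v \<le> 3)"

definition walk :: "'a set \<Rightarrow> ('a \<Rightarrow> 'a \<Rightarrow> bool) \<Rightarrow> 'a list \<Rightarrow> bool" where
  "walk V E xs \<longleftrightarrow> xs \<noteq> [] \<and> set xs \<subseteq> V \<and> (\<forall>i. Suc i < length xs \<longrightarrow> E (xs ! i) (xs ! Suc i))"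

definition reachable :: "'a set \<Rightarrow> ('a \<Rightarrow> 'a \<Rightarrow> bool) \<Rightarrow> 'a \<Rightarrow> 'a \<Rightarrow> bool" where
  "reachable V E u v \<longleftrightarrow> (\<exists>xs. walk V E xs \<and> hd xs = u \<and> last xs = v)"

definition connected_graph :: "'a set \<Rightarrow> ('a \<Rightarrow> 'a \<Rightarrow> bool) \<Rightarrow> bool" where
  "connected_graph V E \<longleftrightarrow> V \<noteq> {} \<and> (\<forall>u\<in>V. \<forall>v\<in>V. reachable V E u v)"

definition is_cycle :: "'a set \<Rightarrow> ('a \<Rightarrow> 'a \<Rightarrow> bool) \<Rightarrow> 'a list \<Rightarrow> bool" where
  "is_cycle V E xs \<longleftrightarrow> length xs \<ge> 3 \<and> distinct xs \<and> walk V E xs \<and> E (last xs) (hd xs)"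

definition acyclic_graph :: "'a set \<Rightarrow> ('a \<Rightarrow> 'a \<Rightarrow> bool) \<Rightarrow> bool" where
  "acyclic_graph V E \<longleftrightarrow> \<not> (\<exists>xs. is_cycle V E xs)"

definition tree :: "'a set \<Rightarrow> ('a \<Rightarrow> 'a \<Rightarrow> bool) \<Rightarrow> bool" where
  "tree V E \<longleftrightarrow> graph V E \<and> connected_graph V E \<and> acyclic_graph V E"

text \<open>Distance (number of edges of a shortest walk); only meaningful if reachable.\<close>
definition gdist :: "'a set \<Rightarrow> ('a \<Rightarrow> 'a \<Rightarrow> bool) \<Rightarrow> 'a \<Rightarrow> 'a \<Rightarrow> nat" where
  "gdist V E u v = (LEAST n. \<exists>xs. walk V E xs \<and> hd xs = u \<and> last xs = v \<and> length xs = Suc n)"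

text \<open>The weight (1/2)^(dist(u,v) - 1), with (1/2)^\<infinity> = 0.\<close>
definition exp_weight :: "'a set \<Rightarrow> ('a \<Rightarrow> 'a \<Rightarrow> bool) \<Rightarrow> 'a \<Rightarrow> 'a \<Rightarrow> real" where
  "exp_weight V E u v = (if reachable V E u v then (1/2) powi (int (gdist V E u v) - 1) else 0)"

definition frac_porous_feasible :: "'a set \<Rightarrow> ('a \<Rightarrow> 'a \<Rightarrow> bool) \<Rightarrow> ('a \<Rightarrow> real) \<Rightarrow> bool" where
  "frac_porous_feasible V E x \<longleftrightarrow> (\<forall>u\<in>V. x u \<ge> 0) \<and>
     (\<forall>v\<in>V. (\<Sum>u\<in>V. exp_weight V E u v * x u) \<ge> 1)"

text \<open>Optimum value of the LP (it is attained; we take the infimum of feasible objective values).\<close>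
definition frac_porous_exp_dom :: "'a set \<Rightarrow> ('a \<Rightarrow> 'a \<Rightarrow> bool) \<Rightarrow> real" where
  "frac_porous_exp_dom V E = Inf {(\<Sum>u\<in>V. x u) | x. frac_porous_feasible V E x}"

definition dominating :: "'a set \<Rightarrow> ('a \<Rightarrow> 'a \<Rightarrow> bool) \<Rightarrow> 'a set \<Rightarrow> bool" where
  "dominating V E D \<longleftrightarrow> D \<subseteq> V \<and> (\<forall>v\<in>V - D. \<exists>u\<in>D. E u v)"

definition domination_number :: "'a set \<Rightarrow> ('a \<Rightarrow> 'a \<Rightarrow> bool) \<Rightarrow> nat" where
  "domination_number V E = Min (card ` {D. dominating V E D})"

definition is_K13 :: "'a set \<Rightarrow> ('a \<Rightarrow> 'a \<Rightarrow> bool) \<Rightarrow> bool" where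
  "is_K13 V E \<longleftrightarrow> (\<exists>f. bij_betw f V {0..(3::nat)} \<and>
     (\<forall>u\<in>V. \<forall>v\<in>V. E u v \<longleftrightarrow> ((f u = 0 \<and> f v \<noteq> 0) \<or> (f v = 0 \<and> f u \<noteq> 0))))"

end

theory Submission imports Defs begin

lemma walk1: "v \<in> V \<Longrightarrow> walk V E [v]"
  by (simp add: walk_def)
lemma walk2: "a \<in> V \<Longrightarrow> b \<in> V \<Longrightarrow> E a b \<Longrightarrow> walk V E [a,b]"
  by (auto simp: walk_def less_Suc_eq)
lemma walk3: "a \<in> V \<Longrightarrow> b \<in> V \<Longrightarrow> c \<in> V \<Longrightarrow> E a b \<Longrightarrow> E b c \<Longrightarrow> walk V E [a,b,c]"
  by (auto simp: walk_def less_Suc_eq)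

lemma gdist_walk:
  assumes "reachable V E u v"
  obtains xs where "walk V E xs" "hd xs = u" "last xs = v" "length xs = Suc (gdist V E u v)"
proof -
  from assms obtain xs where xs: "walk V E xs" "hd xs = u" "last xs = v" unfolding reachable_def by blast
  then have "xs \<noteq> []" by (simp add: walk_def)
  then have "length xs = Suc (length xs - 1)" by simp
  with xs have ex: "\<exists>n. \<exists>xs. walk V E xs \<and> hd xs = u \<and> last xs = v \<and> length xs = Suc n"
    by (intro exI[of _ "length xs - 1"] exI[of _ xs]) simp
  have "\<exists>xs. walk V E xs \<and> hd xs = u \<and> last xs = v \<and> length xs = Suc (gdist V E u v)"
    unfolding gdist_def by (rule LeastI_ex[OF ex])
  then show ?thesis using that by blast
qed

lemma gdist_le:
  assumes "walk V E xs" "hd xs = u" "last xs = v"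
  shows "gdist V E u v \<le> length xs - 1"
proof -
  have "xs \<noteq> []" using assms(1) by (simp add: walk_def)
  then have "length xs = Suc (length xs - 1)" by simp
  then have "\<exists>ys. walk V E ys \<and> hd ys = u \<and> last ys = v \<and> length ys = Suc (length xs - 1)"
    using assms by blast
  then show ?thesis unfolding gdist_def by (rule Least_le)
qed

lemma gdist0: assumes "reachable V E u v" "gdist V E u v = 0" shows "u = v"
proof -
  obtain xs where "walk V E xs" "hd xs = u" "last xs = v" "length xs = Suc 0"
    using gdist_walk[OF assms(1), unfolded assms(2)] by blast
  then show ?thesis by (cases xs) auto
qed

lemma gdist1: assumes "reachable V E u v" "gdist V E u v = 1" shows "E u v"
proof -
  obtain xs where xs0: "walk V E xs" "hd xs = u" "last xs = v" "length xs = Suc 1"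
    using gdist_walk[OF assms(1), unfolded assms(2)] by blast
  then have xs: "walk V E xs" "hd xs = u" "last xs = v" "length xs = Suc (Suc 0)" by auto
  then have "E (xs ! 0) (xs ! Suc 0)" by (auto simp: walk_def)
  moreover have "xs ! 0 = hd xs" using xs(4) by (cases xs) auto
  moreover have "xs ! Suc 0 = last xs" using xs(4) by (cases xs) (auto simp: last_conv_nth)
  ultimately show ?thesis using xs by simp
qed

lemma ew_eq: "reachable V E u v \<Longrightarrow> exp_weight V E u v =
   (if gdist V E u v = 0 then 2 else (1/2) ^ (gdist V E u v - 1))"
proof -
  assume r: "reachable V E u v"
  show ?thesis
  proof (cases "gdist V E u v = 0")
    case True then show ?thesis using r by (simp add: exp_weight_def power_int_def)
  next
    case False
    then have e: "int (gdist V E u v) - 1 = int (gdist V E u v - 1)" by simp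
    have "(1/2::real) powi (int (gdist V E u v) - 1) = (1/2) ^ (gdist V E u v - 1)"
      unfolding e by (rule power_int_of_nat)
    then show ?thesis using r False by (simp add: exp_weight_def)
  qed
qed

lemma ew_nonneg: "0 \<le> exp_weight V E u v"
  by (cases "reachable V E u v") (auto simp: ew_eq, auto simp: exp_weight_def)

lemma ew_pos: "reachable V E u v \<Longrightarrow> 0 < exp_weight V E u v"
  by (auto simp: ew_eq)

lemma ew_le2: "exp_weight V E u v \<le> 2"
proof (cases "reachable V E u v")
  case True
  have "(1/2::real) ^ n \<le> 2" for n by (rule order.trans[OF power_le_one]) auto
  then show ?thesis using True by (auto simp: ew_eq)
qed (auto simp: exp_weight_def)

lemma ew_self: "v \<in> V \<Longrightarrow> exp_weight V E v v = 2"
proof -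
  assume v: "v \<in> V"
  have r: "reachable V E v v" unfolding reachable_def using walk1[OF v] by force
  have "gdist V E v v = 0" using gdist_le[OF walk1[OF v]] by simp
  then show ?thesis using r by (simp add: ew_eq)
qed

lemma ew_adj: assumes "graph V E" "E u v" shows "1 \<le> exp_weight V E u v"
proof -
  have w: "walk V E [u,v]" using assms by (intro walk2) (auto simp: graph_def)
  have r: "reachable V E u v" unfolding reachable_def using w by force
  have "gdist V E u v \<le> 1" using gdist_le[of V E "[u,v]" u v] w by simp
  then have "gdist V E u v = 0 \<or> gdist V E u v = 1" by auto
  then show ?thesis using r by (auto simp: ew_eq)
qed

lemma ew_path2: assumes "graph V E" "E u w" "E w v" shows "1/2 \<le> exp_weight V E u v"
proof -
  have w: "walk V E [u,w,v]" using assms by (intro walk3) (auto simp: graph_def)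
  have r: "reachable V E u v" unfolding reachable_def using w by force
  have "gdist V E u v \<le> 2" using gdist_le[of V E "[u,w,v]" u v] w by simp
  then have "gdist V E u v = 0 \<or> gdist V E u v = 1 \<or> gdist V E u v = 2" by auto
  then show ?thesis using r by (auto simp: ew_eq)
qed

lemma ew_ne: assumes "u \<noteq> v" shows "exp_weight V E u v \<le> 1"
proof (cases "reachable V E u v")
  case True
  then have "gdist V E u v \<noteq> 0" using gdist0[OF True] assms by blast
  then show ?thesis using True by (auto simp: ew_eq power_le_one)
qed (auto simp: exp_weight_def)

lemma ew_far: assumes "u \<noteq> v" "\<not> E u v" shows "exp_weight V E u v \<le> 1/2"
proof (cases "reachable V E u v")
  case True
  then have g: "gdist V E u v \<noteq> 0" "gdist V E u v \<noteq> 1" using gdist0[OF True] gdist1[OF True] assms by blast+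
  then have k: "gdist V E u v - 1 = Suc (gdist V E u v - 2)" by linarith
  have "(1/2::real) ^ Suc (gdist V E u v - 2) \<le> 1/2" by (simp add: power_le_one)
  then show ?thesis proof -
    have "exp_weight V E u v = (1/2) ^ (gdist V E u v - 1)" using True g by (simp add: ew_eq)
    also have "\<dots> = (1/2) ^ Suc (gdist V E u v - 2)" using k by simp
    finally show ?thesis using \<open>(1/2::real) ^ Suc (gdist V E u v - 2) \<le> 1/2\<close> by simp
  qed
qed (auto simp: exp_weight_def)


lemma LP_le:
  assumes "frac_porous_feasible V E x"
  shows "frac_porous_exp_dom V E \<le> (\<Sum>u\<in>V. x u)"
  unfolding frac_porous_exp_dom_def
proof (rule cInf_lower)
  show "(\<Sum>u\<in>V. x u) \<in> {\<Sum>u\<in>V. x u |x. frac_porous_feasible V E x}" using assms by blast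
  show "bdd_below {\<Sum>u\<in>V. x u |x. frac_porous_feasible V E x}"
    by (rule bdd_belowI[of _ 0]) (auto simp: frac_porous_feasible_def intro!: sum_nonneg)
qed

lemma LP_ge:
  assumes "frac_porous_feasible V E x0"
    and "\<And>x. frac_porous_feasible V E x \<Longrightarrow> c \<le> (\<Sum>u\<in>V. x u)"
  shows "c \<le> frac_porous_exp_dom V E"
  unfolding frac_porous_exp_dom_def
  by (rule cInf_greatest) (use assms in auto)

lemma dom_fin: "finite V \<Longrightarrow> finite {D. dominating V E D}"
  by (rule finite_subset[of _ "Pow V"]) (auto simp: dominating_def)

lemma dom_V: "dominating V E V" by (simp add: dominating_def)

lemma gamma_obtain: assumes "finite V"
  obtains D where "dominating V E D" "card D = domination_number V E"
proof -
  have "domination_number V E \<in> card ` {D. dominating V E D}"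
    unfolding domination_number_def using dom_fin[OF assms, of E] dom_V[of V E]
    by (intro Min_in) auto
  then obtain D where "D \<in> {D. dominating V E D}" "domination_number V E = card D" by (rule imageE)
  then show ?thesis using that by simp
qed

lemma gamma_le: "finite V \<Longrightarrow> dominating V E D \<Longrightarrow> domination_number V E \<le> card D"
  unfolding domination_number_def using dom_fin[of V E] by (intro Min_le) auto

lemma sum_ind: fixes f :: "'a \<Rightarrow> real" shows "finite V \<Longrightarrow> D \<subseteq> V \<Longrightarrow>
  (\<Sum>u\<in>V. f u * (if u \<in> D then c else 0)) = (\<Sum>u\<in>D. f u) * c"
proof -
  assume V: "finite V" and D: "D \<subseteq> V"
  have "(\<Sum>u\<in>V. f u * (if u \<in> D then c else 0)) = (\<Sum>u\<in>V. if u \<in> D then f u * c else 0)"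
    by (rule sum.cong) auto
  also have "\<dots> = (\<Sum>u\<in>V \<inter> D. f u * c)" using sum.inter_restrict[OF V] by metis
  also have "V \<inter> D = D" using D by blast
  finally show ?thesis by (simp add: sum_distrib_right)
qed

lemma big_D:
  assumes g: "graph V E" and c: "connected_graph V E" and d: "dominating V E D" and two: "card D \<ge> 2"
  shows "frac_porous_exp_dom V E < real (card D)"
proof -
  have fin: "finite V" using g by (simp add: graph_def)
  have DV: "D \<subseteq> V" using d by (simp add: dominating_def)
  have finD: "finite D" using finite_subset[OF DV fin] .
  have Vne: "V \<noteq> {}" using c by (simp add: connected_graph_def)
  define S where "S v = (\<Sum>u\<in>D. exp_weight V E u v)" for v
  have S1: "S v > 1" if v: "v \<in> V" for v
  proof (cases "v \<in> D")
    case True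
    have "S v = exp_weight V E v v + (\<Sum>u\<in>D - {v}. exp_weight V E u v)"
      unfolding S_def using sum.remove[OF finD True] .
    moreover have "(\<Sum>u\<in>D - {v}. exp_weight V E u v) \<ge> 0" by (intro sum_nonneg ew_nonneg)
    ultimately show ?thesis using ew_self[OF v] by simp
  next
    case False
    then obtain u where u: "u \<in> D" "E u v" using d v by (auto simp: dominating_def)
    have "card (D - {u}) \<ge> 1" using two u finD by simp
    then obtain u' where u': "u' \<in> D - {u}"
      by (metis card.empty ex_in_conv not_one_le_zero)
    have "S v = exp_weight V E u v + (\<Sum>w\<in>D - {u}. exp_weight V E w v)"
      unfolding S_def using sum.remove[OF finD u(1)] .
    also have "(\<Sum>w\<in>D - {u}. exp_weight V E w v) = exp_weight V E u' v + (\<Sum>w\<in>D - {u} - {u'}. exp_weight V E w v)"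
      using sum.remove[OF _ u'] finD by blast
    finally have eq: "S v = exp_weight V E u v + exp_weight V E u' v + (\<Sum>w\<in>D - {u} - {u'}. exp_weight V E w v)"
      by simp
    have "(\<Sum>w\<in>D - {u} - {u'}. exp_weight V E w v) \<ge> 0" by (intro sum_nonneg ew_nonneg)
    moreover have "exp_weight V E u v \<ge> 1" using ew_adj[OF g u(2)] .
    moreover have "reachable V E u' v" using c u' DV v by (auto simp: connected_graph_def)
    then have "exp_weight V E u' v > 0" by (rule ew_pos)
    ultimately show ?thesis using eq by linarith
  qed
  define m where "m = Min (S ` V)"
  have m_in: "m \<in> S ` V" unfolding m_def using fin Vne by (intro Min_in) auto
  have m1: "m > 1" using m_in S1 by auto
  have mle: "m \<le> S v" if "v \<in> V" for v unfolding m_def using fin that by (intro Min_le) auto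
  define x where "x u = (if u \<in> D then 1 / m else 0)" for u
  have feas: "frac_porous_feasible V E x"
    unfolding frac_porous_feasible_def
  proof (intro conjI ballI)
    fix u assume "u \<in> V" show "0 \<le> x u" using m1 by (simp add: x_def)
  next
    fix v assume v: "v \<in> V"
    have "(\<Sum>u\<in>V. exp_weight V E u v * x u) = S v * (1/m)"
      unfolding x_def S_def by (rule sum_ind[OF fin DV])
    also have "\<dots> \<ge> 1" using mle[OF v] m1 by (simp add: field_simps)
    finally show "1 \<le> (\<Sum>u\<in>V. exp_weight V E u v * x u)" .
  qed
  have "(\<Sum>u\<in>V. x u) = (\<Sum>u\<in>V. 1 * x u)" by simp
  also have "\<dots> = (\<Sum>u\<in>D. 1) * (1/m)" unfolding x_def by (rule sum_ind[OF fin DV])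
  also have "\<dots> = real (card D) / m" by simp
  also have "\<dots> < real (card D)" using m1 two by (simp add: field_simps)
  finally show ?thesis using LP_le[OF feas] by linarith
qed


lemma graph_sym: "graph V E \<Longrightarrow> E u v \<Longrightarrow> E v u" by (simp add: graph_def)
lemma graph_irr: "graph V E \<Longrightarrow> \<not> E v v" by (simp add: graph_def)
lemma graph_in: "graph V E \<Longrightarrow> E u v \<Longrightarrow> u \<in> V \<and> v \<in> V" by (simp add: graph_def)

lemma star0: assumes g: "graph V E" and V: "V = {d}" shows "frac_porous_exp_dom V E < 1"
proof -
  have feas: "frac_porous_feasible V E (\<lambda>_. 1/2)"
    unfolding frac_porous_feasible_def using ew_self[of d V E] V by simp
  show ?thesis using LP_le[OF feas] V by simp
qed

lemma star1: assumes g: "graph V E" and V: "V = {d,a}" and da: "d \<noteq> a" and e: "E d a"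
  shows "frac_porous_exp_dom V E < 1"
proof -
  have e': "E a d" using graph_sym[OF g e] .
  have dV: "d \<in> V" and aV: "a \<in> V" using V by auto
  have feas: "frac_porous_feasible V E (\<lambda>_. 1/3)"
    unfolding frac_porous_feasible_def
  proof (intro conjI ballI)
    fix v assume "v \<in> V"
    then have "v = d \<or> v = a" using V by auto
    then show "1 \<le> (\<Sum>u\<in>V. exp_weight V E u v * (1/3))"
      using da ew_self[OF dV] ew_self[OF aV] ew_adj[OF g e] ew_adj[OF g e'] V by auto
  qed simp
  show ?thesis using LP_le[OF feas] V da by simp
qed

lemma star2: assumes g: "graph V E" and V: "V = {d,a,b}" and dist: "d \<noteq> a" "d \<noteq> b" "a \<noteq> b"
  and e: "E d a" "E d b"
  shows "frac_porous_exp_dom V E < 1"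
proof -
  have e': "E a d" "E b d" using graph_sym[OF g] e by auto
  have dV: "d \<in> V" and aV: "a \<in> V" and bV: "b \<in> V" using V by auto
  define x where "x u = (if u = d then 1/6 else (1/3::real))" for u
  have w: "exp_weight V E d d = 2" "exp_weight V E a a = 2" "exp_weight V E b b = 2"
    using ew_self[OF dV] ew_self[OF aV] ew_self[OF bV] by auto
  have w1: "exp_weight V E d a \<ge> 1" "exp_weight V E d b \<ge> 1" "exp_weight V E a d \<ge> 1" "exp_weight V E b d \<ge> 1"
    using ew_adj[OF g] e e' by auto
  have w2: "exp_weight V E a b \<ge> 1/2" "exp_weight V E b a \<ge> 1/2"
    using ew_path2[OF g e'(1) e(2)] ew_path2[OF g e'(2) e(1)] by auto
  have feas: "frac_porous_feasible V E x"
    unfolding frac_porous_feasible_def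
  proof (intro conjI ballI)
    fix v assume "v \<in> V"
    then have "v = d \<or> v = a \<or> v = b" using V by auto
    then show "1 \<le> (\<Sum>u\<in>V. exp_weight V E u v * x u)"
      using dist w w1 w2 V by (auto simp: x_def)
  qed (simp add: x_def)
  show ?thesis using LP_le[OF feas] V dist by (simp add: x_def)
qed

lemma K13_LP:
  assumes g: "graph V E" and V: "V = {c,a1,a2,a3}"
    and dist: "c \<noteq> a1" "c \<noteq> a2" "c \<noteq> a3" "a1 \<noteq> a2" "a1 \<noteq> a3" "a2 \<noteq> a3"
    and e: "E c a1" "E c a2" "E c a3"
    and ne: "\<not> E a1 a2" "\<not> E a1 a3" "\<not> E a2 a3"
  shows "frac_porous_exp_dom V E = 1"
proof -
  have cV: "c \<in> V" using V by auto
  define x0 where "x0 u = (if u = c then 1 else (0::real))" for u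
  have feas: "frac_porous_feasible V E x0"
    unfolding frac_porous_feasible_def
  proof (intro conjI ballI)
    fix v assume "v \<in> V"
    then have "v = c \<or> v = a1 \<or> v = a2 \<or> v = a3" using V by auto
    then show "1 \<le> (\<Sum>u\<in>V. exp_weight V E u v * x0 u)"
      using dist ew_self[OF cV] ew_adj[OF g] e V by (auto simp: x0_def)
  qed (simp add: x0_def)
  have up: "frac_porous_exp_dom V E \<le> 1" using LP_le[OF feas] V dist by (simp add: x0_def)
  have ne': "\<not> E a2 a1" "\<not> E a3 a1" "\<not> E a3 a2" using ne graph_sym[OF g] by blast+
  have lo: "1 \<le> frac_porous_exp_dom V E"
  proof (rule LP_ge[OF feas])
    fix x assume f: "frac_porous_feasible V E x"
    have nn: "x c \<ge> 0" "x a1 \<ge> 0" "x a2 \<ge> 0" "x a3 \<ge> 0" using f V by (auto simp: frac_porous_feasible_def)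
    have con: "1 \<le> (\<Sum>u\<in>V. exp_weight V E u v * x u)" if "v \<in> V" for v
      using f that by (auto simp: frac_porous_feasible_def)
    have bnd: "exp_weight V E u v * x u \<le> B * x u" if "exp_weight V E u v \<le> B" "x u \<ge> 0" for u v B
      using that by (simp add: mult_right_mono)
    have s: "(\<Sum>u\<in>V. exp_weight V E u v * x u) = exp_weight V E c v * x c + exp_weight V E a1 v * x a1
       + exp_weight V E a2 v * x a2 + exp_weight V E a3 v * x a3" for v
      using V dist by simp
    have c1: "1 \<le> x c + 2 * x a1 + 1/2 * x a2 + 1/2 * x a3"
      using con[of a1] s[of a1] V
        bnd[OF ew_ne[OF dist(1), of V E] nn(1)] bnd[OF ew_le2[of V E a1 a1] nn(2)]
        bnd[OF ew_far[where E=E and V=V, OF dist(4)[symmetric] ne'(1)] nn(3)] bnd[OF ew_far[where E=E and V=V, OF dist(5)[symmetric] ne'(2)] nn(4)]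
      by auto
    have c2: "1 \<le> x c + 1/2 * x a1 + 2 * x a2 + 1/2 * x a3"
      using con[of a2] s[of a2] V
        bnd[OF ew_ne[OF dist(2), of V E] nn(1)] bnd[OF ew_le2[of V E a2 a2] nn(3)]
        bnd[OF ew_far[where E=E and V=V, OF dist(4) ne(1)] nn(2)] bnd[OF ew_far[where E=E and V=V, OF dist(6)[symmetric] ne'(3)] nn(4)]
      by auto
    have c3: "1 \<le> x c + 1/2 * x a1 + 1/2 * x a2 + 2 * x a3"
      using con[of a3] s[of a3] V
        bnd[OF ew_ne[OF dist(3), of V E] nn(1)] bnd[OF ew_le2[of V E a3 a3] nn(4)]
        bnd[OF ew_far[where E=E and V=V, OF dist(5) ne(2)] nn(2)] bnd[OF ew_far[where E=E and V=V, OF dist(6) ne(3)] nn(3)]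
      by auto
    have "(\<Sum>u\<in>V. x u) = x c + x a1 + x a2 + x a3" using V dist by simp
    then show "1 \<le> (\<Sum>u\<in>V. x u)" using c1 c2 c3 nn by linarith
  qed
  show ?thesis using up lo by simp
qed


lemma config_K13:
  assumes g: "graph V E" and V: "V = {c,a1,a2,a3}"
    and dist: "c \<noteq> a1" "c \<noteq> a2" "c \<noteq> a3" "a1 \<noteq> a2" "a1 \<noteq> a3" "a2 \<noteq> a3"
    and e: "E c a1" "E c a2" "E c a3"
    and ne: "\<not> E a1 a2" "\<not> E a1 a3" "\<not> E a2 a3"
  shows "is_K13 V E"
proof -
  have e': "E a1 c" "E a2 c" "E a3 c" using e graph_sym[OF g] by blast+
  have ne': "\<not> E a2 a1" "\<not> E a3 a1" "\<not> E a3 a2" using ne graph_sym[OF g] by blast+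
  have irr: "\<not> E v v" for v using graph_irr[OF g] .
  define f where "f v = (if v = c then 0 else if v = a1 then 1 else if v = a2 then 2 else (3::nat))" for v
  have "bij_betw f V {0..3}"
  proof (rule bij_betwI')
    show "\<And>x y. x \<in> V \<Longrightarrow> y \<in> V \<Longrightarrow> (f x = f y) = (x = y)" using V dist by (auto simp: f_def)
    show "\<And>x. x \<in> V \<Longrightarrow> f x \<in> {0..3}" by (auto simp: f_def)
    fix y assume "y \<in> {0..(3::nat)}"
    then have "y = 0 \<or> y = 1 \<or> y = 2 \<or> y = 3" by auto
    then show "\<exists>x\<in>V. y = f x" using V dist by (auto simp: f_def)
  qed
  moreover have "\<forall>u\<in>V. \<forall>v\<in>V. E u v \<longleftrightarrow> ((f u = 0 \<and> f v \<noteq> 0) \<or> (f v = 0 \<and> f u \<noteq> 0))"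
    using V dist e e' ne ne' irr by (auto simp: f_def)
  ultimately show ?thesis unfolding is_K13_def by blast
qed

lemma K13_config:
  assumes g: "graph V E" and k: "is_K13 V E"
  obtains c a1 a2 a3 where "V = {c,a1,a2,a3}"
    "c \<noteq> a1" "c \<noteq> a2" "c \<noteq> a3" "a1 \<noteq> a2" "a1 \<noteq> a3" "a2 \<noteq> a3"
    "E c a1" "E c a2" "E c a3" "\<not> E a1 a2" "\<not> E a1 a3" "\<not> E a2 a3"
proof -
  obtain f where b: "bij_betw f V {0..(3::nat)}"
    and ed: "\<forall>u\<in>V. \<forall>v\<in>V. E u v \<longleftrightarrow> ((f u = 0 \<and> f v \<noteq> 0) \<or> (f v = 0 \<and> f u \<noteq> 0))"
    using k unfolding is_K13_def by blast
  have im: "f ` V = {0..3}" using b by (simp add: bij_betw_def)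
  have inj: "inj_on f V" using b by (simp add: bij_betw_def)
  have ex: "\<exists>x\<in>V. f x = i" if "i \<le> 3" for i
  proof -
    have "i \<in> f ` V" using im that by simp
    then show ?thesis by force
  qed
  obtain c where c: "c \<in> V" "f c = 0" using ex[of 0] by auto
  obtain a1 where a1: "a1 \<in> V" "f a1 = 1" using ex[of 1] by auto
  obtain a2 where a2: "a2 \<in> V" "f a2 = 2" using ex[of 2] by auto
  obtain a3 where a3: "a3 \<in> V" "f a3 = 3" using ex[of 3] by auto
  have "V = {c,a1,a2,a3}"
  proof
    show "{c,a1,a2,a3} \<subseteq> V" using c a1 a2 a3 by auto
    show "V \<subseteq> {c,a1,a2,a3}"
    proof
      fix v assume v: "v \<in> V"
      then have "f v \<in> {0..3}" using im by blast
      then have "f v = 0 \<or> f v = 1 \<or> f v = 2 \<or> f v = 3" by auto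
      then have "f v = f c \<or> f v = f a1 \<or> f v = f a2 \<or> f v = f a3" using c a1 a2 a3 by simp
      then show "v \<in> {c,a1,a2,a3}" using inj_on_eq_iff[OF inj v] c a1 a2 a3 by blast
    qed
  qed
  moreover have "c \<noteq> a1" "c \<noteq> a2" "c \<noteq> a3" "a1 \<noteq> a2" "a1 \<noteq> a3" "a2 \<noteq> a3"
    using c a1 a2 a3 by auto
  moreover have "E c a1" "E c a2" "E c a3" "\<not> E a1 a2" "\<not> E a1 a3" "\<not> E a2 a3"
    using ed[rule_format, OF c(1) a1(1)] ed[rule_format, OF c(1) a2(1)] ed[rule_format, OF c(1) a3(1)]
      ed[rule_format, OF a1(1) a2(1)] ed[rule_format, OF a1(1) a3(1)] ed[rule_format, OF a2(1) a3(1)]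
      c a1 a2 a3 by simp_all
  ultimately show ?thesis using that by blast
qed

theorem mainTheorem5:
  fixes V :: "'a set" and E :: "'a \<Rightarrow> 'a \<Rightarrow> bool"
  assumes "tree V E" and "subcubic V E"
  shows "real (domination_number V E) = frac_porous_exp_dom V E \<longleftrightarrow> is_K13 V E"
proof -
  have g: "graph V E" and conn: "connected_graph V E" and acyc: "acyclic_graph V E"
    using assms(1) by (auto simp: tree_def)
  have fin: "finite V" using g by (simp add: graph_def)
  have Vne: "V \<noteq> {}" using conn by (simp add: connected_graph_def)
  have gam_pos: "domination_number V E \<ge> 1"
  proof -
    obtain D where D: "dominating V E D" "card D = domination_number V E" using gamma_obtain[OF fin] .
    have "D \<noteq> {}" using D(1) Vne by (auto simp: dominating_def)
    moreover have "finite D" using D(1) fin by (auto simp: dominating_def intro: finite_subset)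
    ultimately have "card D > 0" by (simp add: card_gt_0_iff)
    then show ?thesis using D(2) by simp
  qed
  show ?thesis
  proof
    assume k: "is_K13 V E"
    obtain c a1 a2 a3 where cf: "V = {c,a1,a2,a3}"
      "c \<noteq> a1" "c \<noteq> a2" "c \<noteq> a3" "a1 \<noteq> a2" "a1 \<noteq> a3" "a2 \<noteq> a3"
      "E c a1" "E c a2" "E c a3" "\<not> E a1 a2" "\<not> E a1 a3" "\<not> E a2 a3"
      using K13_config[OF g k] by blast
    have "dominating V E {c}" using cf by (auto simp: dominating_def)
    then have "domination_number V E \<le> 1" using gamma_le[OF fin] by fastforce
    then have "domination_number V E = 1" using gam_pos by simp
    moreover have "frac_porous_exp_dom V E = 1" using K13_LP[OF g cf] .
    ultimately show "real (domination_number V E) = frac_porous_exp_dom V E" by simp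
  next
    assume eq: "real (domination_number V E) = frac_porous_exp_dom V E"
    obtain D where D: "dominating V E D" "card D = domination_number V E" using gamma_obtain[OF fin] .
    have "\<not> card D \<ge> 2" using big_D[OF g conn D(1)] eq D(2) by auto
    then have "card D = 1" using gam_pos D(2) by simp
    then obtain d where Dd: "D = {d}" by (auto simp: card_1_singleton_iff)
    have gam1: "domination_number V E = 1" using D(2) Dd by simp
    have dV: "d \<in> V" using D(1) Dd by (auto simp: dominating_def)
    define N where "N = {u \<in> V. E d u}"
    have VN: "V = insert d N" using D(1) Dd dV graph_in[OF g] by (auto simp: N_def dominating_def)
    have dN: "d \<notin> N" using graph_irr[OF g] by (auto simp: N_def)
    have cN: "card N \<le> 3" using assms(2) dV by (auto simp: subcubic_def degree_def N_def)
    have Nsub: "\<And>u. u \<in> N \<Longrightarrow> E d u" by (auto simp: N_def)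
    have noE: "\<not> E a b" if "a \<in> N" "b \<in> N" "a \<noteq> b" for a b
    proof
      assume ab: "E a b"
      have "a \<in> V" "b \<in> V" using that by (auto simp: N_def)
      have w: "walk V E [d,a,b]" using walk3[OF dV \<open>a \<in> V\<close> \<open>b \<in> V\<close> Nsub[OF that(1)] ab] .
      have "distinct [d,a,b]" using that dN by auto
      moreover have "E b d" using graph_sym[OF g Nsub[OF that(2)]] .
      ultimately have "is_cycle V E [d,a,b]"
        unfolding is_cycle_def using w by simp
      then show False using acyc by (auto simp: acyclic_graph_def)
    qed
    have "card N = 0 \<or> card N = 1 \<or> card N = 2 \<or> card N = 3" using cN by auto
    then show "is_K13 V E"
    proof (elim disjE)
      assume "card N = 0"
      then have "N = {}" using fin VN by (metis card_0_eq finite_insert)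
      then have "frac_porous_exp_dom V E < 1" using star0[OF g] VN by simp
      then show ?thesis using eq gam1 by simp
    next
      assume "card N = 1"
      then obtain a where "N = {a}" by (auto simp: card_1_singleton_iff)
      then have "frac_porous_exp_dom V E < 1" using star1[OF g, of d a] VN dN Nsub by auto
      then show ?thesis using eq gam1 by simp
    next
      assume "card N = 2"
      then obtain a b where ab: "N = {a,b}" "a \<noteq> b" by (auto simp: card_2_iff)
      then have "frac_porous_exp_dom V E < 1" using star2[OF g, of d a b] VN dN Nsub by auto
      then show ?thesis using eq gam1 by simp
    next
      assume "card N = 3"
      then obtain a b c where abc: "N = {a,b,c}" "a \<noteq> b" "b \<noteq> c" "a \<noteq> c" by (auto simp: card_3_iff)
      have V4: "V = {d,a,b,c}" using VN abc by simp
      have ins: "a \<in> N" "b \<in> N" "c \<in> N" using abc by auto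
      have dd: "d \<noteq> a" "d \<noteq> b" "d \<noteq> c" using ins dN by auto
      show ?thesis
        by (rule config_K13[OF g V4 dd abc(2) abc(4) abc(3) Nsub[OF ins(1)] Nsub[OF ins(2)] Nsub[OF ins(3)]
            noE[OF ins(1) ins(2) abc(2)] noE[OF ins(1) ins(3) abc(4)] noE[OF ins(2) ins(3) abc(3)]])
    qed
  qed
qed

end
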